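(* Let $F$ be a field of characteristic zero and let $A$ be an $F$-algebra isomorphic to a direct sum (not necessarily finite) of finite field extensions of $F$ (for instance, a direct sum of copies of $F$). Then the only Rota–Baxter operator of weight zero on $A$ is the zero operator.
   Context: A linear operator $R$ on $A$ is a Rota–Baxter operator of weight $0$ if $R(x)R(y)=R(R(x)y+xR(y))$ for all $x,y\in A$. *)

theory Defs
  imports Main
begin

definition is_subfield :: "'k::field set \<Rightarrow> bool" where
  "is_subfield K \<longleftrightarrow> 0 \<in> K \<and> 1 \<in> K \<and> (\<forall>x\<in>K. \<forall>y\<in>K. x + y \<in> K \<and> x * y \<in> K)
     \<and> (\<forall>x\<in>K. - x \<in> K) \<and> (\<forall>x\<in>K. x \<noteq> 0 \<longrightarrow> inverse x \<in> K)"

definition field_emb :: "('f::field \<Rightarrow> 'k::field) \<Rightarrow> bool" where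
  "field_emb emb \<longleftrightarrow> emb 1 = 1 \<and> (\<forall>a b. emb (a + b) = emb a + emb b) \<and> (\<forall>a b. emb (a * b) = emb a * emb b)"

definition finite_ext :: "('f::field \<Rightarrow> 'k::field) \<Rightarrow> 'k set \<Rightarrow> bool" where
  "finite_ext emb K \<longleftrightarrow> is_subfield K \<and> range emb \<subseteq> K \<and>
     (\<exists>B. finite B \<and> B \<subseteq> K \<and> (\<forall>x\<in>K. \<exists>c. x = (\<Sum>b\<in>B. emb (c b) * b)))"

text \<open>Carrier of the (possibly infinite) direct sum of the K i, i in I: finitely supported
  families; operations are componentwise.\<close>
definition dsum :: "'i set \<Rightarrow> ('i \<Rightarrow> 'k::field set) \<Rightarrow> ('i \<Rightarrow> 'k) set" where
  "dsum I K = {f. (\<forall>i\<in>I. f i \<in> K i) \<and> (\<forall>i. i \<notin> I \<longrightarrow> f i = 0) \<and> finite {i\<in>I. f i \<noteq> 0}}"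

definition F_algebra :: "('f::field \<Rightarrow> 'a::ring \<Rightarrow> 'a) \<Rightarrow> bool" where
  "F_algebra smul \<longleftrightarrow>
     (\<forall>c x y. smul c (x + y) = smul c x + smul c y) \<and>
     (\<forall>c d x. smul (c + d) x = smul c x + smul d x) \<and>
     (\<forall>c d x. smul (c * d) x = smul c (smul d x)) \<and>
     (\<forall>x. smul 1 x = x) \<and>
     (\<forall>c x y. smul c (x * y) = smul c x * y \<and> smul c (x * y) = x * smul c y)"

definition alg_iso_dsum ::
  "('f::field \<Rightarrow> 'a::ring \<Rightarrow> 'a) \<Rightarrow> ('f \<Rightarrow> 'k::field) \<Rightarrow> 'i set \<Rightarrow> ('i \<Rightarrow> 'k set) \<Rightarrow> ('a \<Rightarrow> 'i \<Rightarrow> 'k) \<Rightarrow> bool" where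
  "alg_iso_dsum smul emb I K \<phi> \<longleftrightarrow> bij_betw \<phi> UNIV (dsum I K) \<and>
     (\<forall>x y. \<phi> (x + y) = (\<lambda>i. \<phi> x i + \<phi> y i)) \<and>
     (\<forall>x y. \<phi> (x * y) = (\<lambda>i. \<phi> x i * \<phi> y i)) \<and>
     (\<forall>c x. \<phi> (smul c x) = (\<lambda>i. emb c * \<phi> x i))"

definition F_linear :: "('f::field \<Rightarrow> 'a::ring \<Rightarrow> 'a) \<Rightarrow> ('a \<Rightarrow> 'a) \<Rightarrow> bool" where
  "F_linear smul R \<longleftrightarrow> (\<forall>x y. R (x + y) = R x + R y) \<and> (\<forall>c x. R (smul c x) = smul c (R x))"

definition rota_baxter0 :: "('a::ring \<Rightarrow> 'a) \<Rightarrow> bool" where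
  "rota_baxter0 R \<longleftrightarrow> (\<forall>x y. R x * R y = R (R x * y + x * R y))"

end

theory Submission
  imports Defs Complex_Main
begin

fun pw :: "'a::ring \<Rightarrow> nat \<Rightarrow> 'a" where
  "pw a 0 = a"
| "pw a (Suc n) = a * pw a n"

context
  fixes smul :: "'f::field_char_0 \<Rightarrow> 'a::ring \<Rightarrow> 'a"
    and emb :: "'f \<Rightarrow> 'k::field"
    and I :: "'i set" and K :: "'i \<Rightarrow> 'k set"
    and \<phi> :: "'a \<Rightarrow> 'i \<Rightarrow> 'k"
    and R :: "'a \<Rightarrow> 'a"
  assumes alg: "F_algebra smul"
    and emb: "field_emb emb"
    and ext: "\<forall>i\<in>I. finite_ext emb (K i)"
    and iso: "alg_iso_dsum smul emb I K \<phi>"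
    and lin: "F_linear smul R"
    and rb: "rota_baxter0 R"
begin

lemma vs: "vector_space smul"
  using alg unfolding vector_space_def F_algebra_def by auto

interpretation V: vector_space smul by (rule vs)

lemma smul_mult_l: "smul c (x * y) = smul c x * y"
  using alg unfolding F_algebra_def by blast
lemma smul_mult_r: "smul c (x * y) = x * smul c y"
  using alg unfolding F_algebra_def by blast

lemma phi_add: "\<phi> (x + y) = (\<lambda>i. \<phi> x i + \<phi> y i)"
  and phi_mult: "\<phi> (x * y) = (\<lambda>i. \<phi> x i * \<phi> y i)"
  and phi_smul: "\<phi> (smul c x) = (\<lambda>i. emb c * \<phi> x i)"
  and phi_bij: "bij_betw \<phi> UNIV (dsum I K)"
  using iso unfolding alg_iso_dsum_def by auto

lemma phi_inj: "\<phi> x = \<phi> y \<Longrightarrow> x = y"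
  using phi_bij by (auto simp: bij_betw_def inj_on_def)

lemma phi_in: "\<phi> x \<in> dsum I K"
  using phi_bij by (auto simp: bij_betw_def)

lemma phi0: "\<phi> 0 = (\<lambda>i. 0)"
proof
  fix i
  have "\<phi> (0 + 0) i = \<phi> 0 i + \<phi> 0 i" by (simp only: phi_add)
  then show "\<phi> 0 i = 0" by (metis add_cancel_left_right add_0)
qed

lemma phi_sum: "\<phi> (sum f T) = (\<lambda>i. \<Sum>t\<in>T. \<phi> (f t) i)"
  by (induction T rule: infinite_finite_induct) (auto simp: phi0 phi_add)

lemma phi_pw: "\<phi> (pw a n) = (\<lambda>i. \<phi> a i ^ Suc n)"
  by (induction n) (auto simp: phi_mult)

lemma comm: "x * y = y * (x::'a)"
  by (rule phi_inj) (simp add: phi_mult mult.commute)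

lemma emb0: "emb 0 = 0"
proof -
  have "emb (0 + 0) = emb 0 + emb 0" using emb unfolding field_emb_def by blast
  then show ?thesis by (metis add_cancel_left_right add_0)
qed

lemma emb_mult: "emb (a * b) = emb a * emb b" and emb_one: "emb 1 = 1"
  and emb_add: "emb (a + b) = emb a + emb b"
  using emb unfolding field_emb_def by auto

lemma emb_neg: "emb (- a) = - emb a"
proof -
  have "emb (a + - a) = emb a + emb (- a)" by (rule emb_add)
  then show ?thesis by (simp add: emb0 eq_neg_iff_add_eq_0 add.commute)
qed

lemma emb_nz: "c \<noteq> 0 \<Longrightarrow> emb c \<noteq> 0"
proof
  assume "c \<noteq> 0" "emb c = 0"
  have "emb (c * inverse c) = emb c * emb (inverse c)" by (rule emb_mult)
  with \<open>c \<noteq> 0\<close> \<open>emb c = 0\<close> show False by (simp add: emb_one)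
qed

lemma R_add: "R (x + y) = R x + R y" and R_smul: "R (smul c x) = smul c (R x)"
  using lin unfolding F_linear_def by auto

lemma R_sum: "R (sum f T) = (\<Sum>t\<in>T. R (f t))"
proof (induction T rule: infinite_finite_induct)
  case (infinite A)
  have "R (0 + 0) = R 0 + R 0" by (rule R_add)
  then show ?case using infinite by simp
next
  case empty
  have "R (0 + 0) = R 0 + R 0" by (rule R_add)
  then show ?case by simp
qed (auto simp: R_add)

lemma RB: "R x * R y = R (R x * y + x * R y)"
  using rb unfolding rota_baxter0_def by auto

lemma Rpow: "pw (R x) n = R (smul (of_nat (Suc n)) (case n of 0 \<Rightarrow> x | Suc m \<Rightarrow> pw (R x) m * x))"
proof (induction n)
  case 0
  then show ?case by simp
next
  case (Suc n)
  let ?a = "R x"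
  let ?q = "case n of 0 \<Rightarrow> x | Suc m \<Rightarrow> pw (R x) m * x"
  have aq: "?a * ?q = pw ?a n * x"
    by (cases n) (auto simp: mult.assoc)
  have "pw ?a (Suc n) = ?a * R (smul (of_nat (Suc n)) ?q)" using Suc by simp
  also have "\<dots> = R (?a * smul (of_nat (Suc n)) ?q + x * pw ?a n)"
    using Suc RB by metis
  also have "?a * smul (of_nat (Suc n)) ?q = smul (of_nat (Suc n)) (pw ?a n * x)"
    by (simp add: smul_mult_r[symmetric] aq)
  also have "x * pw ?a n = pw ?a n * x" by (rule comm)
  also have "smul (of_nat (Suc n)) (pw ?a n * x) + pw ?a n * x
     = smul (of_nat (Suc (Suc n))) (pw ?a n * x)"
    by (metis V.scale_left_distrib V.scale_one of_nat_Suc[of "Suc n"] add.commute)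
  finally show ?case by simp
qed

lemma idem: assumes "u = R z" "u * u = u" shows "u = 0"
proof -
  define v where "v = R (u * z)"
  define c2 :: 'f where "c2 = of_nat (Suc (Suc 0))"
  define c3 :: 'f where "c3 = of_nat (Suc (Suc (Suc 0)))"
  have p1: "pw u (Suc 0) = R (smul c2 (pw u 0 * z))" using Rpow[of z "Suc 0"] assms(1) c2_def by simp
  have p2: "pw u (Suc (Suc 0)) = R (smul c3 (pw u (Suc 0) * z))"
    using Rpow[of z "Suc (Suc 0)"] assms(1) c3_def by simp
  have e1: "pw u (Suc 0) = u" using assms(2) by simp
  have e2: "pw u (Suc (Suc 0)) = u" using assms(2) by simp
  have a: "u = smul c2 v" using p1 e1 by (simp add: R_smul v_def)
  have b: "u = smul c3 v" using p2 e1 e2 by (simp add: R_smul v_def)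
  have c32: "c3 = c2 + 1" unfolding c2_def c3_def by (simp only: of_nat_Suc add.commute)
  have "smul c3 v = smul c2 v + v"
    unfolding c32 V.scale_left_distrib V.scale_one ..
  then have "v = 0" using a b by simp
  then show ?thesis using a by simp
qed

lemma range_sum:
  assumes h: "\<And>n. n \<in> T \<Longrightarrow> f n \<in> range R"
  shows "(\<Sum>n\<in>T. smul (d n) (f n)) \<in> range R"
proof -
  from h have "\<forall>n\<in>T. \<exists>y. f n = R y" by blast
  then obtain y where y: "\<And>n. n\<in>T \<Longrightarrow> f n = R (y n)" by metis
  have "R (\<Sum>n\<in>T. smul (d n) (y n)) = (\<Sum>n\<in>T. smul (d n) (f n))"
    unfolding R_sum R_smul using y by (intro sum.cong refl) simp
  then show ?thesis by (rule range_eqI[OF sym])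
qed

lemma pw_range: "pw (R x) n \<in> range R"
  using Rpow[of x n] by (metis rangeI)

lemma span_fin:
  assumes fS: "finite S" and SI: "S \<subseteq> I"
  shows "\<exists>G. finite G \<and> (\<forall>y. (\<forall>i. i \<notin> S \<longrightarrow> \<phi> y i = 0) \<longrightarrow> y \<in> V.span G)"
proof -
  have "\<forall>i\<in>I. \<exists>B. finite B \<and> B \<subseteq> K i \<and> (\<forall>x\<in>K i. \<exists>c. x = (\<Sum>b\<in>B. emb (c b) * b))"
    using ext unfolding finite_ext_def by blast
  then obtain B where B: "\<And>i. i\<in>I \<Longrightarrow> finite (B i) \<and> B i \<subseteq> K i \<and> (\<forall>x\<in>K i. \<exists>c. x = (\<Sum>b\<in>B i. emb (c b) * b))"
    by metis
  have zK: "\<And>j. j \<in> I \<Longrightarrow> 0 \<in> K j"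
    using ext unfolding finite_ext_def is_subfield_def by blast
  define d :: "'i \<Rightarrow> 'k \<Rightarrow> 'i \<Rightarrow> 'k" where "d i b = (\<lambda>j. if j = i then b else (0::'k))" for i b
  have dmem: "d i b \<in> dsum I K" if "i \<in> I" "b \<in> K i" for i b
  proof -
    have "{j\<in>I. d i b j \<noteq> 0} \<subseteq> {i}" by (auto simp: d_def)
    then have "finite {j\<in>I. d i b j \<noteq> 0}" by (rule finite_subset) simp
    then show ?thesis using that zK by (auto simp: dsum_def d_def)
  qed
  define g where "g i b = inv \<phi> (d i b)" for i b
  have phig: "\<phi> (g i b) = d i b" if "i \<in> I" "b \<in> K i" for i b
    unfolding g_def using bij_betw_inv_into_right[OF phi_bij dmem[OF that]] .
  define G where "G = (\<lambda>(i,b). g i b) ` Sigma S B"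
  have fG: "finite G" unfolding G_def using fS B SI by (auto intro!: finite_imageI finite_SigmaI)
  have "y \<in> V.span G" if hy: "\<forall>i. i \<notin> S \<longrightarrow> \<phi> y i = 0" for y
  proof -
    have "\<forall>i\<in>S. \<exists>c. \<phi> y i = (\<Sum>b\<in>B i. emb (c b) * b)"
    proof
      fix i assume "i \<in> S"
      then have "i \<in> I" using SI by auto
      then have "\<phi> y i \<in> K i" using phi_in[of y] by (auto simp: dsum_def)
      then show "\<exists>c. \<phi> y i = (\<Sum>b\<in>B i. emb (c b) * b)" using B[OF \<open>i \<in> I\<close>] by blast
    qed
    then obtain C where C: "\<And>i. i\<in>S \<Longrightarrow> \<phi> y i = (\<Sum>b\<in>B i. emb (C i b) * b)" by metis
    define z where "z = (\<Sum>i\<in>S. \<Sum>b\<in>B i. smul (C i b) (g i b))"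
    have zs: "z \<in> V.span G" unfolding z_def
      by (intro V.span_sum V.span_scale V.span_base) (auto simp: G_def)
    have "\<phi> z = \<phi> y"
    proof
      fix j
      have "\<phi> z j = (\<Sum>i\<in>S. \<Sum>b\<in>B i. emb (C i b) * d i b j)"
        unfolding z_def phi_sum phi_smul using SI B phig
        by (auto intro!: sum.cong simp: subset_iff)
      also have "\<dots> = (\<Sum>i\<in>S. if j = i then (\<Sum>b\<in>B i. emb (C i b) * b) else 0)"
        by (intro sum.cong refl) (auto simp: d_def)
      also have "\<dots> = \<phi> y j"
        using hy C by (cases "j \<in> S") (simp_all add: sum.delta' fS)
      finally show "\<phi> z j = \<phi> y j" .
    qed
    then have "z = y" by (rule phi_inj)
    then show ?thesis using zs by simp
  qed
  then show ?thesis using fG by blast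
qed

lemma dep: "\<exists>c N. (\<exists>n\<le>N. c n \<noteq> 0) \<and> (\<Sum>n\<le>N. smul (c n) (pw a n)) = 0"
proof -
  define S where "S = {i\<in>I. \<phi> a i \<noteq> 0}"
  have fS: "finite S" using phi_in[of a] by (simp add: S_def dsum_def)
  obtain G where fG: "finite G" and G: "\<And>y. (\<forall>i. i \<notin> S \<longrightarrow> \<phi> y i = 0) \<Longrightarrow> y \<in> V.span G"
    using span_fin[OF fS] S_def by blast
  have insp: "pw a n \<in> V.span G" for n
  proof (rule G, intro allI impI)
    fix i assume "i \<notin> S"
    then have "\<phi> a i = 0" using phi_in[of a] by (auto simp: S_def dsum_def)
    then show "\<phi> (pw a n) i = 0" by (simp add: phi_pw)
  qed
  define N where "N = card G"
  show ?thesis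
  proof (cases "inj_on (pw a) {..N}")
    case True
    define P where "P = pw a ` {..N}"
    have cP: "card P = Suc N" unfolding P_def using True by (simp add: card_image)
    have fP: "finite P" unfolding P_def by simp
    have "\<not> V.independent P"
    proof
      assume ind: "V.independent P"
      have sub: "P \<subseteq> V.span G" using insp unfolding P_def by auto
      have "finite P \<and> card P \<le> card G" by (rule V.independent_span_bound[OF fG ind sub])
      then show False using cP N_def by simp
    qed
    then obtain u where u: "\<exists>v\<in>P. u v \<noteq> 0" "(\<Sum>v\<in>P. smul (u v) v) = 0"
      using V.dependent_finite[OF fP] by blast
    have "(\<Sum>v\<in>P. smul (u v) v) = (\<Sum>n\<le>N. smul (u (pw a n)) (pw a n))"
      unfolding P_def by (rule sum.reindex_cong[OF True refl]) simp
    then have "(\<Sum>n\<le>N. smul (u (pw a n)) (pw a n)) = 0" using u(2) by simp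
    moreover
    obtain v where v: "v \<in> P" "u v \<noteq> 0" using u(1) by blast
    then obtain n where "n \<le> N" "v = pw a n" unfolding P_def by blast
    then have "\<exists>n\<le>N. u (pw a n) \<noteq> 0" using v by blast
    ultimately show ?thesis by (intro exI[of _ "\<lambda>n. u (pw a n)"] exI[of _ N]) simp
  next
    case False
    then obtain j k where jk: "j \<le> N" "k \<le> N" "j \<noteq> k" "pw a j = pw a k"
      unfolding inj_on_def by auto
    define c :: "nat \<Rightarrow> 'f" where "c n = (if n = j then 1 else 0) - (if n = k then 1 else 0)" for n
    have t: "smul (c n) (pw a n) = (if n = j then pw a n else 0) - (if n = k then pw a n else 0)" for n
      by (simp add: c_def V.scale_left_diff_distrib)
    have "(\<Sum>n\<le>N. smul (c n) (pw a n)) = 0"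
      unfolding t sum_subtractf using jk by (simp add: sum.delta')
    moreover have "c j \<noteq> 0" using jk by (simp add: c_def)
    ultimately show ?thesis using jk by (intro exI[of _ c] exI[of _ N]) auto
  qed
qed

lemma main: "R x = 0"
proof -
  define a where "a = R x"
  obtain c N where cN1: "\<exists>n\<le>N. c n \<noteq> 0" and cN2: "(\<Sum>n\<le>N. smul (c n) (pw a n)) = 0"
    using dep[of a] by blast
  define m where "m = (LEAST n. c n \<noteq> 0)"
  obtain n0 where n0: "n0 \<le> N" "c n0 \<noteq> 0" using cN1 by blast
  have cm: "c m \<noteq> 0" unfolding m_def using n0(2) by (rule LeastI)
  have mN: "m \<le> N" using Least_le[of "\<lambda>n. c n \<noteq> 0" n0] n0 unfolding m_def by simp
  have below: "c n = 0" if "n < m" for n using not_less_Least[of n "\<lambda>n. c n \<noteq> 0"] that unfolding m_def by blast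
  define w where "w = (\<Sum>n\<in>{m<..N}. smul (c n) (pw a (n - m - 1)))"
  have phiw: "\<phi> w i = (\<Sum>n\<in>{m<..N}. emb (c n) * \<phi> a i ^ (n - m))" for i
  proof -
    have "\<phi> w i = (\<Sum>n\<in>{m<..N}. emb (c n) * \<phi> a i ^ Suc (n - m - 1))"
      unfolding w_def phi_sum phi_smul phi_pw by simp
    also have "\<dots> = (\<Sum>n\<in>{m<..N}. emb (c n) * \<phi> a i ^ (n - m))"
      by (intro sum.cong refl) (simp add: Suc_diff_Suc)
    finally show ?thesis .
  qed
  have rel: "(\<Sum>n\<le>N. emb (c n) * \<phi> a i ^ Suc n) = 0" for i
  proof -
    have "\<phi> (\<Sum>n\<le>N. smul (c n) (pw a n)) i = 0" using cN2 phi0 by simp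
    then show ?thesis unfolding phi_sum phi_smul phi_pw by simp
  qed
  have split: "(\<Sum>n\<le>N. f n) = (\<Sum>n<m. f n) + f m + (\<Sum>n\<in>{m<..N}. f n)" for f :: "nat \<Rightarrow> 'k"
  proof -
    have e: "{..N} = {..<m} \<union> ({m} \<union> {m<..N})" using mN by auto
    have "sum f ({..<m} \<union> ({m} \<union> {m<..N})) = sum f {..<m} + sum f ({m} \<union> {m<..N})"
      by (rule sum.union_disjoint) auto
    also have "sum f ({m} \<union> {m<..N}) = f m + sum f {m<..N}"
      by (subst sum.union_disjoint) auto
    finally show ?thesis unfolding e by (simp add: add.assoc)
  qed
  have key: "\<phi> w i = - emb (c m)" if nz: "\<phi> a i \<noteq> 0" for i
  proof -
    let ?\<alpha> = "\<phi> a i"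
    have "(emb (c m) + \<phi> w i) * ?\<alpha> ^ Suc m
        = emb (c m) * ?\<alpha> ^ Suc m + (\<Sum>n\<in>{m<..N}. emb (c n) * ?\<alpha> ^ Suc n)"
    proof -
      have "\<phi> w i * ?\<alpha> ^ Suc m = (\<Sum>n\<in>{m<..N}. emb (c n) * ?\<alpha> ^ (n - m) * ?\<alpha> ^ Suc m)"
        unfolding phiw sum_distrib_right ..
      also have "\<dots> = (\<Sum>n\<in>{m<..N}. emb (c n) * ?\<alpha> ^ Suc n)"
      proof (intro sum.cong refl)
        fix n assume "n \<in> {m<..N}"
        then have "n - m + Suc m = Suc n" by auto
        then show "emb (c n) * ?\<alpha> ^ (n - m) * ?\<alpha> ^ Suc m = emb (c n) * ?\<alpha> ^ Suc n"
          by (metis mult.assoc power_add)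
      qed
      finally show ?thesis by (simp add: distrib_right)
    qed
    also have "\<dots> = (\<Sum>n\<le>N. emb (c n) * ?\<alpha> ^ Suc n)"
      unfolding split[of "\<lambda>n. emb (c n) * ?\<alpha> ^ Suc n"] using below by (simp add: emb0)
    also have "\<dots> = 0" by (rule rel)
    finally have "emb (c m) + \<phi> w i = 0" using nz by simp
    then show ?thesis by (simp add: eq_neg_iff_add_eq_0 add.commute)
  qed
  have zer: "\<phi> w i = 0" if z: "\<phi> a i = 0" for i
    unfolding phiw using z by (intro sum.neutral) auto
  define u where "u = smul (- inverse (c m)) w"
  have phiu: "\<phi> u i = (if \<phi> a i \<noteq> 0 then 1 else 0)" for i
  proof (cases "\<phi> a i = 0")
    case True
    then show ?thesis unfolding u_def phi_smul by (simp add: zer)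
  next
    case False
    have "\<phi> u i = emb (- inverse (c m)) * (- emb (c m))" unfolding u_def phi_smul by (simp add: key False)
    also have "\<dots> = emb (inverse (c m) * c m)" by (simp add: emb_neg emb_mult)
    also have "\<dots> = 1" using cm by (simp add: emb_one)
    finally show ?thesis using False by simp
  qed
  have "w \<in> range R" unfolding w_def a_def by (rule range_sum) (rule pw_range)
  then obtain y where "w = R y" by blast
  then have uR: "u = R (smul (- inverse (c m)) y)" unfolding u_def R_smul by simp
  have uu: "u * u = u" by (rule phi_inj) (auto simp: phi_mult phiu)
  have u0: "u = 0" by (rule idem[OF uR uu])
  have "\<phi> a = \<phi> 0"
  proof
    fix i
    show "\<phi> a i = \<phi> 0 i"
    proof (rule ccontr)
      assume "\<phi> a i \<noteq> \<phi> 0 i"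
      then have "\<phi> a i \<noteq> 0" by (simp add: phi0)
      then have "\<phi> u i = 1" by (simp add: phiu)
      then show False using u0 phi0 by simp
    qed
  qed
  then have "a = 0" by (rule phi_inj)
  then show ?thesis by (simp add: a_def)
qed

end

theorem corollary8:
  fixes smul :: "'f::field_char_0 \<Rightarrow> 'a::ring \<Rightarrow> 'a"
    and emb :: "'f \<Rightarrow> 'k::field"
    and I :: "'i set" and K :: "'i \<Rightarrow> 'k set"
    and \<phi> :: "'a \<Rightarrow> 'i \<Rightarrow> 'k"
    and R :: "'a \<Rightarrow> 'a"
  assumes "F_algebra smul"
    and "field_emb emb"
    and "\<forall>i\<in>I. finite_ext emb (K i)"
    and "alg_iso_dsum smul emb I K \<phi>"
    and "F_linear smul R"
    and "rota_baxter0 R"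
  shows "\<forall>x. R x = 0"
  using main[OF assms] by blast

end
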